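(* Let $A$ be a $2\times2$ integer matrix with determinant $1$ and no eigenvalue of modulus $1$, $f_A\colon\mathbb{T}^2\to\mathbb{T}^2$ the induced Anosov diffeomorphism, and $g_A\colon\mathbb{S}^2\to\mathbb{S}^2$ the homeomorphism induced by $f_A$ on the quotient $\mathbb{S}^2=\mathbb{T}^2/(x\sim -x)$. Then $g_A$ has the two-sided limit shadowing property.
   Context: A homeomorphism $f$ of a compact metric space has the two-sided limit shadowing property if for every sequence $(x_k)_{k\in\mathbb{Z}}$ with $d(f(x_k),x_{k+1})\to0$ as $|k|\to\infty$ there is $y$ with $d(f^k(y),x_k)\to0$ as $|k|\to\infty$. *)

theory Defs
  imports "HOL-Analysis.Analysis"
begin

definition Zlat :: "(real^2) set" where
  "Zlat = {v. \<forall>i. v$i \<in> \<int>}"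

definition realmat :: "int^2^2 \<Rightarrow> real^2^2" where
  "realmat A = (\<chi> i j. real_of_int (A$i$j))"

definition tcls :: "real^2 \<Rightarrow> (real^2) set" where
  "tcls x = {y. y - x \<in> Zlat}"

definition Torus :: "(real^2) set set" where
  "Torus = range tcls"

definition fA :: "int^2^2 \<Rightarrow> (real^2) set \<Rightarrow> (real^2) set" where
  "fA A c = (\<lambda>x. realmat A *v x) ` c"

text \<open>Sphere S^2 = T^2/(x ~ -x): a point is the class {p, -p} of torus points,
  represented as the union of the two cosets (a subset of R^2).\<close>
definition scls :: "real^2 \<Rightarrow> (real^2) set" where
  "scls x = tcls x \<union> tcls (- x)"

definition Sphere :: "(real^2) set set" where
  "Sphere = range scls"

definition Sdist :: "(real^2) set \<Rightarrow> (real^2) set \<Rightarrow> real" where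
  "Sdist a b = Inf {dist p q | p q. p \<in> a \<and> q \<in> b}"

definition gA :: "int^2^2 \<Rightarrow> (real^2) set \<Rightarrow> (real^2) set" where
  "gA A c = \<Union> {fA A t | t. t \<in> Torus \<and> t \<subseteq> c}"

definition iter_int :: "'a set \<Rightarrow> ('a \<Rightarrow> 'a) \<Rightarrow> int \<Rightarrow> 'a \<Rightarrow> 'a" where
  "iter_int X f k = (if 0 \<le> k then f ^^ nat k else (inv_into X f) ^^ nat (- k))"

definition two_sided_limit_shadowing ::
  "'a set \<Rightarrow> ('a \<Rightarrow> 'a \<Rightarrow> real) \<Rightarrow> ('a \<Rightarrow> 'a) \<Rightarrow> bool" where
  "two_sided_limit_shadowing X d f \<longleftrightarrow>
     (\<forall>x :: int \<Rightarrow> 'a. (\<forall>k. x k \<in> X) \<longrightarrow>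
        ((\<lambda>k. d (f (x k)) (x (k + 1))) \<longlongrightarrow> 0) (sup at_top at_bot) \<longrightarrow>
        (\<exists>y\<in>X. ((\<lambda>k. d (iter_int X f k y) (x k)) \<longlongrightarrow> 0) (sup at_top at_bot)))"

end

theory Submission
  imports Defs
begin


abbreviation FF :: "int filter" where "FF \<equiv> sup at_top at_bot"

lemma FF_nonbot: "FF \<noteq> bot"
  using trivial_limit_at_top_linorder[where 'a=int] by simp

lemma bounded_of_tendsto0:
  fixes \<eta> :: "int \<Rightarrow> real"
  assumes "(\<eta> \<longlongrightarrow> 0) FF"
  shows "\<exists>B. \<forall>k. \<bar>\<eta> k\<bar> \<le> B"
proof -
  have "eventually (\<lambda>k. \<bar>\<eta> k\<bar> < 1) FF"
    using tendstoD[OF assms, of 1] by (simp add: dist_real_def)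
  then obtain N1 N2 where N1: "\<And>k. k \<ge> N1 \<Longrightarrow> \<bar>\<eta> k\<bar> < 1" and N2: "\<And>k. k \<le> N2 \<Longrightarrow> \<bar>\<eta> k\<bar> < 1"
    unfolding eventually_sup eventually_at_top_linorder eventually_at_bot_linorder by blast
  define B where "B = 1 + (\<Sum>k\<in>{N2..N1}. \<bar>\<eta> k\<bar>)"
  have "\<bar>\<eta> k\<bar> \<le> B" for k
  proof (cases "k \<ge> N1 \<or> k \<le> N2")
    case True
    then have "\<bar>\<eta> k\<bar> < 1" using N1 N2 by blast
    moreover have "(\<Sum>k\<in>{N2..N1}. \<bar>\<eta> k\<bar>) \<ge> 0" by (simp add: sum_nonneg)
    ultimately show ?thesis unfolding B_def by linarith
  next
    case False
    then have "k \<in> {N2..N1}" by auto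
    then have "\<bar>\<eta> k\<bar> \<le> (\<Sum>k\<in>{N2..N1}. \<bar>\<eta> k\<bar>)"
      by (intro member_le_sum) auto
    then show ?thesis unfolding B_def by linarith
  qed
  then show ?thesis by blast
qed

lemma shift_tendsto0:
  fixes \<eta> :: "int \<Rightarrow> real"
  assumes "(\<eta> \<longlongrightarrow> 0) FF"
  shows "((\<lambda>k. \<eta> (k + c)) \<longlongrightarrow> 0) FF"
  unfolding tendsto_def
proof (intro allI impI)
  fix S :: "real set" assume "open S" "0 \<in> S"
  then have "eventually (\<lambda>k. \<eta> k \<in> S) FF" using assms unfolding tendsto_def by blast
  then obtain N1 N2 where N1: "\<And>k. k \<ge> N1 \<Longrightarrow> \<eta> k \<in> S" and N2: "\<And>k. k \<le> N2 \<Longrightarrow> \<eta> k \<in> S"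
    unfolding eventually_sup eventually_at_top_linorder eventually_at_bot_linorder by blast
  have "\<forall>k\<ge>N1 - c. \<eta> (k + c) \<in> S" using N1 by auto
  moreover have "\<forall>k\<le>N2 - c. \<eta> (k + c) \<in> S" using N2 by auto
  ultimately show "eventually (\<lambda>k. \<eta> (k + c) \<in> S) FF"
    unfolding eventually_sup eventually_at_top_linorder eventually_at_bot_linorder by blast
qed

lemma series_summable:
  fixes \<eta> :: "int \<Rightarrow> real"
  assumes "\<bar>q\<bar> < 1" "\<forall>k. \<bar>\<eta> k\<bar> \<le> B"
  shows "summable (\<lambda>i. q^i * \<eta> (h i))"
proof (rule summable_comparison_test)
  show "\<exists>N. \<forall>n\<ge>N. norm (q^n * \<eta> (h n)) \<le> \<bar>q\<bar>^n * B"
    using assms(2) by (auto simp: abs_mult power_abs intro!: mult_left_mono)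
  show "summable (\<lambda>n. \<bar>q\<bar>^n * B)"
    using assms(1) by (intro summable_mult2 summable_geometric) simp
qed

lemma series_tendsto0:
  fixes \<eta> :: "int \<Rightarrow> real"
  assumes "\<bar>q\<bar> < 1" "(\<eta> \<longlongrightarrow> 0) FF"
  shows "((\<lambda>k. \<Sum>i. q^i * \<eta> (k + c * int i + s)) \<longlongrightarrow> 0) FF"
proof -
  obtain B where B: "\<forall>k. \<bar>\<eta> k\<bar> \<le> B" using bounded_of_tendsto0[OF assms(2)] by blast
  have "((\<lambda>k. \<Sum>i. q^i * \<eta> (k + c * int i + s)) \<longlongrightarrow> (\<Sum>i. (0::real))) FF"
  proof (rule tannerys_theorem[THEN conjunct2, THEN conjunct2])
    fix i
    have "((\<lambda>k. \<eta> (k + (c * int i + s))) \<longlongrightarrow> 0) FF" by (rule shift_tendsto0[OF assms(2)])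
    then have "((\<lambda>k. q^i * \<eta> (k + (c * int i + s))) \<longlongrightarrow> 0) FF" by (rule tendsto_mult_right_zero)
    then show "((\<lambda>k. q^i * \<eta> (k + c * int i + s)) \<longlongrightarrow> 0) FF" by (simp add: add.assoc)
  next
    show "eventually (\<lambda>(i,k). norm (q^i * \<eta> (k + c * int i + s)) \<le> \<bar>q\<bar>^i * B) (at_top \<times>\<^sub>F FF)"
      using B by (intro always_eventually) (auto simp: abs_mult power_abs intro!: mult_left_mono)
    show "summable (\<lambda>i. \<bar>q\<bar>^i * B)"
      using assms(1) by (intro summable_mult2 summable_geometric) simp
    show "FF \<noteq> bot" by (rule FF_nonbot)
  qed
  then show ?thesis by simp
qed

lemma scalar_solution:
  fixes \<eta> :: "int \<Rightarrow> real"
  assumes r: "\<bar>r\<bar> \<noteq> 1" and eta: "(\<eta> \<longlongrightarrow> 0) FF"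
  shows "\<exists>X. (\<forall>k. X (k+1) = r * X k - \<eta> k) \<and> (X \<longlongrightarrow> 0) FF"
proof -
  obtain B where B: "\<forall>k. \<bar>\<eta> k\<bar> \<le> B" using bounded_of_tendsto0[OF eta] by blast
  show ?thesis
  proof (cases "\<bar>r\<bar> < 1")
    case True
    define S where "S k = (\<Sum>i. r^i * \<eta> (k + (-1) * int i + (-1)))" for k
    have sum: "summable (\<lambda>i. r^i * \<eta> (k + (-1) * int i + (-1)))" for k
      by (rule series_summable[OF True B])
    have rec: "S (k+1) = \<eta> k + r * S k" for k
    proof -
      have "(\<Sum>i. r^(Suc i) * \<eta> (k + 1 + (-1) * int (Suc i) + (-1))) = S (k+1) - r^0 * \<eta> (k + 1 + (-1) * int 0 + (-1))"
        unfolding S_def by (rule suminf_split_head[OF sum])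
      moreover have "(\<Sum>i. r^(Suc i) * \<eta> (k + 1 + (-1) * int (Suc i) + (-1))) = r * S k"
        unfolding S_def
        by (subst suminf_mult[OF sum, symmetric]) (simp add: algebra_simps)
      ultimately show ?thesis by simp
    qed
    have lim: "(S \<longlongrightarrow> 0) FF" unfolding S_def by (rule series_tendsto0[OF True eta])
    show ?thesis
      apply (rule exI[of _ "\<lambda>k. - S k"])
      using rec tendsto_minus[OF lim] by (simp add: algebra_simps)
  next
    case False
    with r have r1: "\<bar>r\<bar> > 1" by simp
    define q where "q = 1 / r"
    have q: "\<bar>q\<bar> < 1" using r1 by (simp add: q_def abs_divide)
    have rq: "r * q = 1" using r1 by (auto simp: q_def)
    define T where "T k = (\<Sum>i. q^i * \<eta> (k + 1 * int i + 0))" for k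
    have sum: "summable (\<lambda>i. q^i * \<eta> (k + 1 * int i + 0))" for k
      by (rule series_summable[OF q B])
    have rec: "q * T (k+1) = T k - \<eta> k" for k
    proof -
      have "(\<Sum>i. q^(Suc i) * \<eta> (k + 1 * int (Suc i) + 0)) = T k - q^0 * \<eta> (k + 1 * int 0 + 0)"
        unfolding T_def by (rule suminf_split_head[OF sum])
      moreover have "(\<Sum>i. q^(Suc i) * \<eta> (k + 1 * int (Suc i) + 0)) = q * T (k+1)"
        unfolding T_def
        by (subst suminf_mult[OF sum, symmetric]) (simp add: algebra_simps)
      ultimately show ?thesis by simp
    qed
    have lim: "(T \<longlongrightarrow> 0) FF" unfolding T_def by (rule series_tendsto0[OF q eta])
    show ?thesis
    proof (rule exI[of _ "\<lambda>k. q * T k"], intro conjI allI)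
      fix k
      have "r * (q * T k) = T k" using rq by (simp add: mult.assoc[symmetric])
      then show "q * T (k + 1) = r * (q * T k) - \<eta> k" using rec[of k] by simp
    next
      show "((\<lambda>k. q * T k) \<longlongrightarrow> 0) FF" using tendsto_mult_right_zero[OF lim] by simp
    qed
  qed
qed

lemma Zlat_iff: "v \<in> Zlat \<longleftrightarrow> v$1 \<in> \<int> \<and> v$2 \<in> \<int>"
  by (simp add: Zlat_def forall_2)

lemma Zlat_add: "u \<in> Zlat \<Longrightarrow> v \<in> Zlat \<Longrightarrow> u + v \<in> Zlat"
  by (simp add: Zlat_iff)
lemma Zlat_diff: "u \<in> Zlat \<Longrightarrow> v \<in> Zlat \<Longrightarrow> u - v \<in> Zlat"
  by (simp add: Zlat_iff)
lemma Zlat_uminus: "u \<in> Zlat \<Longrightarrow> - u \<in> Zlat"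
  by (simp add: Zlat_iff)
lemma Zlat_0: "0 \<in> Zlat"
  by (simp add: Zlat_iff)

definition rel :: "real^2 \<Rightarrow> real^2 \<Rightarrow> bool" where
  "rel y x \<longleftrightarrow> y - x \<in> Zlat \<or> y + x \<in> Zlat"

lemma scls_mem: "y \<in> scls x \<longleftrightarrow> rel y x"
  by (simp add: scls_def tcls_def rel_def)

lemma rel_refl: "rel x x"
  by (simp add: rel_def Zlat_0)

lemma rel_sym: "rel y x \<Longrightarrow> rel x y"
proof -
  assume "rel y x"
  then consider "y - x \<in> Zlat" | "y + x \<in> Zlat" unfolding rel_def by blast
  then show "rel x y"
  proof cases
    case 1
    then have "-(y - x) \<in> Zlat" by (rule Zlat_uminus)
    then show ?thesis by (simp add: rel_def)
  next
    case 2
    then show ?thesis by (simp add: rel_def add.commute)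
  qed
qed

lemma rel_trans: "rel z y \<Longrightarrow> rel y x \<Longrightarrow> rel z x"
proof -
  assume h1: "rel z y" and h2: "rel y x"
  from h1 consider "z - y \<in> Zlat" | "z + y \<in> Zlat" unfolding rel_def by blast
  then show "rel z x"
  proof cases
    case 1
    from h2 consider "y - x \<in> Zlat" | "y + x \<in> Zlat" unfolding rel_def by blast
    then show ?thesis
    proof cases
      case a: 1
      have "z - x = (z - y) + (y - x)" by simp
      then show ?thesis using Zlat_add[OF 1 a] by (simp add: rel_def)
    next
      case a: 2
      have "z + x = (z - y) + (y + x)" by simp
      then show ?thesis using Zlat_add[OF 1 a] by (simp add: rel_def)
    qed
  next
    case 2
    from h2 consider "y - x \<in> Zlat" | "y + x \<in> Zlat" unfolding rel_def by blast
    then show ?thesis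
    proof cases
      case a: 1
      have "z + x = (z + y) - (y - x)" by simp
      then show ?thesis using Zlat_diff[OF 2 a] by (simp add: rel_def)
    next
      case a: 2
      have "z - x = (z + y) - (y + x)" by simp
      then show ?thesis using Zlat_diff[OF 2 a] by (simp add: rel_def)
    qed
  qed
qed

lemma scls_self: "x \<in> scls x"
  by (simp add: scls_mem rel_refl)

lemma scls_eq: "y \<in> scls x \<Longrightarrow> scls y = scls x"
proof -
  assume "y \<in> scls x"
  then have h: "rel y x" by (simp add: scls_mem)
  show "scls y = scls x"
  proof (rule set_eqI)
    fix z
    have "rel z y \<Longrightarrow> rel z x" using h rel_trans by blast
    moreover have "rel z x \<Longrightarrow> rel z y" using rel_sym[OF h] rel_trans by blast
    ultimately show "z \<in> scls y \<longleftrightarrow> z \<in> scls x" by (auto simp: scls_mem)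
  qed
qed

lemma transport:
  assumes "p \<in> scls a" "q \<in> scls b" "a' \<in> scls a"
  shows "\<exists>b'\<in>scls b. dist a' b' = dist p q"
proof -
  have "rel a' p" using assms(1,3) scls_eq by (metis scls_mem)
  then consider "a' - p \<in> Zlat" | "a' + p \<in> Zlat" unfolding rel_def by blast
  then show ?thesis
  proof cases
    case 1
    define n where "n = a' - p"
    have "q + n \<in> scls q" using 1 by (simp add: scls_mem rel_def n_def)
    then have "q + n \<in> scls b" using scls_eq[OF assms(2)] by simp
    moreover have "dist a' (q + n) = dist p q"
    proof -
      have "a' - (q + n) = p - q" by (simp add: n_def algebra_simps)
      then show ?thesis by (simp only: dist_norm)
    qed
    ultimately show ?thesis by blast
  next
    case 2
    define n where "n = a' + p"
    have "n - q \<in> scls q" using 2 by (simp add: scls_mem rel_def n_def)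
    then have "n - q \<in> scls b" using scls_eq[OF assms(2)] by simp
    moreover have "dist a' (n - q) = dist p q"
    proof -
      have "a' - (n - q) = q - p" by (simp add: n_def algebra_simps)
      then show ?thesis by (simp only: dist_norm norm_minus_commute[of q p])
    qed
    ultimately show ?thesis by blast
  qed
qed

lemma transport2:
  assumes "p \<in> scls a" "q \<in> scls b" "b' \<in> scls b"
  shows "\<exists>a'\<in>scls a. dist a' b' = dist p q"
  using transport[OF assms(2,1,3)] by (metis dist_commute)

lemma Sdist_le:
  assumes "p \<in> a" "q \<in> b" shows "Sdist a b \<le> dist p q"
  unfolding Sdist_def
  by (rule cInf_lower) (use assms in \<open>auto intro!: bdd_belowI[of _ 0]\<close>)

lemma Sdist_nonneg:
  assumes "a \<noteq> {}" "b \<noteq> {}" shows "0 \<le> Sdist a b"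
  unfolding Sdist_def
  by (rule cInf_greatest) (use assms in auto)

lemma Sdist_approx:
  assumes "a \<noteq> {}" "b \<noteq> {}" "\<epsilon> > 0"
  shows "\<exists>p\<in>a. \<exists>q\<in>b. dist p q < Sdist a b + \<epsilon>"
proof -
  have "{dist p q | p q. p \<in> a \<and> q \<in> b} \<noteq> {}" using assms by auto
  from cInf_lessD[OF this, of "Sdist a b + \<epsilon>"] assms(3)
  show ?thesis unfolding Sdist_def by auto
qed

locale hypA =
  fixes A :: "int^2^2"
  assumes det1: "det A = 1" and tr: "\<bar>A$1$1 + A$2$2\<bar> > 2"
begin

abbreviation M where "M \<equiv> realmat A"
definition "a = real_of_int (A$1$1)"
definition "b = real_of_int (A$1$2)"
definition "c = real_of_int (A$2$1)"
definition "d = real_of_int (A$2$2)"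
definition "t = a + d"

lemma Mv1 [simp]: "(M *v x)$1 = a * x$1 + b * x$2"
  by (simp add: matrix_vector_mult_def sum_2 realmat_def a_def b_def)
lemma Mv2 [simp]: "(M *v x)$2 = c * x$1 + d * x$2"
  by (simp add: matrix_vector_mult_def sum_2 realmat_def c_def d_def)

lemma detr: "a * d - b * c = 1"
proof -
  have "A$1$1 * A$2$2 - A$1$2 * A$2$1 = 1" using det1 by (simp add: det_2)
  then have "real_of_int (A$1$1 * A$2$2 - A$1$2 * A$2$1) = 1" by simp
  then show ?thesis by (simp add: a_def b_def c_def d_def)
qed

lemma abcd_Ints: "a \<in> \<int>" "b \<in> \<int>" "c \<in> \<int>" "d \<in> \<int>"
  by (simp_all add: a_def b_def c_def d_def)

definition minv :: "real^2 \<Rightarrow> real^2" where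
  "minv x = (\<chi> i. if i = 1 then d * x$1 - b * x$2 else a * x$2 - c * x$1)"

lemma minv1 [simp]: "(minv x)$1 = d * x$1 - b * x$2"
  by (simp add: minv_def)
lemma minv2 [simp]: "(minv x)$2 = a * x$2 - c * x$1"
  by (simp add: minv_def)

lemma M_minv: "M *v minv x = x"
proof -
  have "a * (d * x$1 - b * x$2) + b * (a * x$2 - c * x$1) = (a*d - b*c) * x$1" by (simp add: algebra_simps)
  moreover have "c * (d * x$1 - b * x$2) + d * (a * x$2 - c * x$1) = (a*d - b*c) * x$2" by (simp add: algebra_simps)
  ultimately show ?thesis by (simp add: vec_eq_iff forall_2 detr)
qed

lemma minv_M: "minv (M *v x) = x"
proof -
  have "d * (a * x$1 + b * x$2) - b * (c * x$1 + d * x$2) = (a*d - b*c) * x$1" by (simp add: algebra_simps)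
  moreover have "a * (c * x$1 + d * x$2) - c * (a * x$1 + b * x$2) = (a*d - b*c) * x$2" by (simp add: algebra_simps)
  ultimately show ?thesis by (simp add: vec_eq_iff forall_2 detr)
qed

lemma M_diff: "M *v (x - y) = M *v x - M *v y"
  by (simp add: vec_eq_iff forall_2 algebra_simps)
lemma M_add: "M *v (x + y) = M *v x + M *v y"
  by (simp add: vec_eq_iff forall_2 algebra_simps)
lemma M_uminus: "M *v (- x) = - (M *v x)"
  by (simp add: vec_eq_iff forall_2 algebra_simps)
lemma minv_diff: "minv (x - y) = minv x - minv y"
  by (simp add: vec_eq_iff forall_2 algebra_simps)
lemma minv_add: "minv (x + y) = minv x + minv y"
  by (simp add: vec_eq_iff forall_2 algebra_simps)

lemma M_Zlat: "v \<in> Zlat \<Longrightarrow> M *v v \<in> Zlat"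
  using abcd_Ints by (simp add: Zlat_iff)
lemma minv_Zlat: "v \<in> Zlat \<Longrightarrow> minv v \<in> Zlat"
  using abcd_Ints by (simp add: Zlat_iff)

lemma rel_M: "rel y x \<Longrightarrow> rel (M *v y) (M *v x)"
  unfolding rel_def using M_Zlat M_diff M_add by metis
lemma rel_minv: "rel y x \<Longrightarrow> rel (minv y) (minv x)"
  unfolding rel_def using minv_Zlat minv_diff minv_add by metis

lemma fA_tcls: "fA A (tcls x) = tcls (M *v x)"
proof
  show "fA A (tcls x) \<subseteq> tcls (M *v x)"
  proof
    fix u assume "u \<in> fA A (tcls x)"
    then obtain v where v: "u = M *v v" "v - x \<in> Zlat" by (auto simp: fA_def tcls_def)
    have "M *v (v - x) \<in> Zlat" using M_Zlat[OF v(2)] .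
    then show "u \<in> tcls (M *v x)" by (simp add: tcls_def v(1) M_diff)
  qed
next
  show "tcls (M *v x) \<subseteq> fA A (tcls x)"
  proof
    fix u assume "u \<in> tcls (M *v x)"
    then have "u - M *v x \<in> Zlat" by (simp add: tcls_def)
    then have "minv u - x \<in> Zlat" using minv_Zlat minv_diff minv_M by metis
    then have "minv u \<in> tcls x" by (simp add: tcls_def)
    then show "u \<in> fA A (tcls x)" unfolding fA_def using M_minv by (metis image_eqI)
  qed
qed

lemma tcls_eq: "y - x \<in> Zlat \<Longrightarrow> tcls y = tcls x"
proof -
  assume h: "y - x \<in> Zlat"
  show "tcls y = tcls x"
  proof (rule set_eqI)
    fix z
    have "z - y \<in> Zlat \<Longrightarrow> z - x \<in> Zlat"
    proof -
      assume "z - y \<in> Zlat"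
      from Zlat_add[OF this h] show "z - x \<in> Zlat" by simp
    qed
    moreover have "z - x \<in> Zlat \<Longrightarrow> z - y \<in> Zlat"
    proof -
      assume "z - x \<in> Zlat"
      from Zlat_diff[OF this h] show "z - y \<in> Zlat" by simp
    qed
    ultimately show "z \<in> tcls y \<longleftrightarrow> z \<in> tcls x" by (auto simp: tcls_def)
  qed
qed

lemma torus_sub:
  assumes "t' \<in> Torus" "t' \<subseteq> scls x"
  shows "t' = tcls x \<or> t' = tcls (- x)"
proof -
  obtain y where y: "t' = tcls y" using assms(1) by (auto simp: Torus_def)
  have "y \<in> tcls y" by (simp add: tcls_def Zlat_0)
  then have "rel y x" using assms(2) y scls_mem by blast
  then show ?thesis unfolding rel_def using y tcls_eq[of y "-x"] tcls_eq[of y x] by auto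
qed

lemma gA_scls: "gA A (scls x) = scls (M *v x)"
proof -
  have "{fA A t' | t'. t' \<in> Torus \<and> t' \<subseteq> scls x} = {fA A (tcls x), fA A (tcls (- x))}"
  proof (rule set_eqI, rule iffI)
    fix S assume "S \<in> {fA A t' | t'. t' \<in> Torus \<and> t' \<subseteq> scls x}"
    then obtain t' where "S = fA A t'" "t' \<in> Torus" "t' \<subseteq> scls x" by blast
    then show "S \<in> {fA A (tcls x), fA A (tcls (- x))}" using torus_sub by blast
  next
    fix S assume "S \<in> {fA A (tcls x), fA A (tcls (- x))}"
    moreover have "tcls x \<in> Torus" "tcls (- x) \<in> Torus" by (auto simp: Torus_def)
    moreover have "tcls x \<subseteq> scls x" "tcls (- x) \<subseteq> scls x" by (auto simp: scls_def)
    ultimately show "S \<in> {fA A t' | t'. t' \<in> Torus \<and> t' \<subseteq> scls x}" by blast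
  qed
  then show ?thesis
    by (simp add: gA_def fA_tcls M_uminus scls_def)
qed

end
context hypA begin

lemma t_abs: "\<bar>t\<bar> > 2"
proof -
  have "real_of_int \<bar>A$1$1 + A$2$2\<bar> > 2" using tr by simp
  then show ?thesis by (simp add: t_def a_def d_def)
qed

lemma b_nz: "b \<noteq> 0"
proof
  assume "b = 0"
  then have "A$1$2 = 0" by (simp add: b_def)
  moreover have "A$1$1 * A$2$2 - A$1$2 * A$2$1 = 1" using det1 by (simp add: det_2)
  ultimately have "A$1$1 * A$2$2 = 1" by simp
  then have "(A$1$1 = 1 \<and> A$2$2 = 1) \<or> (A$1$1 = -1 \<and> A$2$2 = -1)" by (simp add: zmult_eq_1_iff)
  then show False using tr by auto
qed

definition "sq = sqrt (t*t - 4)"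
definition "r1 = (t + sq) / 2"
definition "r2 = (t - sq) / 2"

lemma disc_pos: "t*t - 4 > 0"
proof -
  have "2 * 2 < \<bar>t\<bar> * \<bar>t\<bar>" using t_abs by (intro mult_strict_mono) auto
  then show ?thesis by simp
qed

lemma ss: "sq * sq = t*t - 4" "sq > 0"
  using disc_pos by (simp_all add: sq_def)

lemma root1: "r1^2 - t*r1 + 1 = 0"
proof -
  have h: "2 * r1 = t + sq" by (simp add: r1_def)
  have "4 * (r1^2 - t*r1 + 1) = (2*r1)*(2*r1) - 2*t*(2*r1) + 4" by (simp add: power2_eq_square algebra_simps)
  also have "\<dots> = (t + sq)*(t + sq) - 2*t*(t + sq) + 4" by (simp only: h)
  also have "\<dots> = sq * sq - (t*t - 4)" by (simp add: algebra_simps)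
  finally have "4 * (r1^2 - t*r1 + 1) = sq * sq - (t*t - 4)" .
  then show ?thesis using ss by simp
qed

lemma root2: "r2^2 - t*r2 + 1 = 0"
proof -
  have h: "2 * r2 = t - sq" by (simp add: r2_def)
  have "4 * (r2^2 - t*r2 + 1) = (2*r2)*(2*r2) - 2*t*(2*r2) + 4" by (simp add: power2_eq_square algebra_simps)
  also have "\<dots> = (t - sq)*(t - sq) - 2*t*(t - sq) + 4" by (simp only: h)
  also have "\<dots> = sq * sq - (t*t - 4)" by (simp add: algebra_simps)
  finally have "4 * (r2^2 - t*r2 + 1) = sq * sq - (t*t - 4)" .
  then show ?thesis using ss by simp
qed

lemma rnot1: assumes "r^2 - t*r + 1 = 0" shows "\<bar>r\<bar> \<noteq> 1"
proof
  assume "\<bar>r\<bar> = 1"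
  then have "r = 1 \<or> r = -1" by auto
  then show False using assms t_abs by auto
qed

lemma r12: "r1 \<noteq> r2"
  using ss by (simp add: r1_def r2_def)

definition ell :: "real \<Rightarrow> real^2 \<Rightarrow> real" where
  "ell r x = (r - d) * x$1 + b * x$2"

lemma ell_M: assumes "r^2 - t*r + 1 = 0" shows "ell r (M *v x) = r * ell r x"
proof -
  have "ell r (M *v x) - r * ell r x = - x$1 * (r^2 - t*r + 1) + x$1 * (1 - (a*d - b*c))"
    by (simp add: ell_def t_def algebra_simps power2_eq_square)
  then show ?thesis using assms detr by simp
qed

lemma ell_diff: "ell r (x - y) = ell r x - ell r y"
  by (simp add: ell_def algebra_simps)

lemma ell_inj: assumes "ell r1 x = ell r1 y" "ell r2 x = ell r2 y" shows "x = y"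
proof -
  have "(r1 - r2) * (x$1 - y$1) = (ell r1 x - ell r2 x) - (ell r1 y - ell r2 y)"
    by (simp add: ell_def algebra_simps)
  then have "(r1 - r2) * (x$1 - y$1) = 0" using assms by simp
  then have 1: "x$1 = y$1" using r12 by simp
  have "b * (x$2 - y$2) = ell r1 x - ell r1 y" using 1 by (simp add: ell_def algebra_simps)
  then have "x$2 = y$2" using assms b_nz by simp
  with 1 show ?thesis by (simp add: vec_eq_iff forall_2)
qed

definition R :: "real \<Rightarrow> real \<Rightarrow> real^2" where
  "R \<alpha> \<beta> = (\<chi> i. if i = 1 then (\<alpha> - \<beta>) / (r1 - r2) else (\<alpha> - (r1 - d) * ((\<alpha> - \<beta>) / (r1 - r2))) / b)"

lemma R1 [simp]: "(R \<alpha> \<beta>)$1 = (\<alpha> - \<beta>) / (r1 - r2)" by (simp add: R_def)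
lemma R2 [simp]: "(R \<alpha> \<beta>)$2 = (\<alpha> - (r1 - d) * ((\<alpha> - \<beta>) / (r1 - r2))) / b" by (simp add: R_def)

lemma ell_R1: "ell r1 (R \<alpha> \<beta>) = \<alpha>"
proof -
  have "ell r1 (R \<alpha> \<beta>) = (r1 - d) * ((\<alpha> - \<beta>) / (r1 - r2)) + b * ((\<alpha> - (r1 - d) * ((\<alpha> - \<beta>) / (r1 - r2))) / b)"
    by (simp add: ell_def)
  also have "\<dots> = \<alpha>"
  proof -
    have bz: "\<And>Z. b * (Z / b) = Z" using b_nz by simp
    show ?thesis by (simp only: bz)
  qed
  finally show ?thesis .
qed

lemma ell_R2: "ell r2 (R \<alpha> \<beta>) = \<beta>"
proof -
  define Q where "Q = (\<alpha> - \<beta>) / (r1 - r2)"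
  have bz: "\<And>Z. b * (Z / b) = Z" using b_nz by simp
  have gen: "\<And>Q. (r2 - d) * Q + (\<alpha> - (r1 - d) * Q) = \<alpha> - (r1 - r2) * Q" by (simp add: algebra_simps)
  have "ell r2 (R \<alpha> \<beta>) = (r2 - d) * Q + b * ((\<alpha> - (r1 - d) * Q) / b)"
    by (simp add: ell_def Q_def)
  also have "\<dots> = (r2 - d) * Q + (\<alpha> - (r1 - d) * Q)" by (simp only: bz)
  also have "\<dots> = \<alpha> - (r1 - r2) * Q" by (rule gen)
  also have "\<dots> = \<beta>" using r12 by (simp add: Q_def)
  finally show ?thesis .
qed

lemma R_tendsto:
  assumes "(X \<longlongrightarrow> 0) F" "(Y \<longlongrightarrow> 0) F"
  shows "((\<lambda>k. R (X k) (Y k)) \<longlongrightarrow> 0) F"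
proof (rule vec_tendstoI)
  fix i :: 2
  have "i = 1 \<or> i = 2" by (rule exhaust_2)
  then show "((\<lambda>k. R (X k) (Y k) $ i) \<longlongrightarrow> (0::real^2) $ i) F"
  proof
    assume "i = 1"
    then show ?thesis using assms r12 b_nz by (auto intro!: tendsto_eq_intros)
  next
    assume "i = 2"
    then show ?thesis using assms r12 b_nz by (auto intro!: tendsto_eq_intros)
  qed
qed

lemma ell_tendsto: "(e \<longlongrightarrow> 0) F \<Longrightarrow> ((\<lambda>k. ell r (e k)) \<longlongrightarrow> 0) F"
  unfolding ell_def by (auto intro!: tendsto_eq_intros)

lemma hyperbolic_shadow:
  fixes w :: "int \<Rightarrow> real^2"
  assumes "((\<lambda>k. M *v w k - w (k+1)) \<longlongrightarrow> 0) FF"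
  shows "\<exists>z. (\<forall>k. z (k+1) = M *v z k) \<and> ((\<lambda>k. z k - w k) \<longlongrightarrow> 0) FF"
proof -
  define e where "e k = M *v w k - w (k+1)" for k
  have "e = (\<lambda>k. M *v w k - w (k+1))" by (simp add: e_def fun_eq_iff)
  then have e0: "(e \<longlongrightarrow> 0) FF" using assms by simp
  obtain X1 where X1: "\<forall>k. X1 (k+1) = r1 * X1 k - ell r1 (e k)" "(X1 \<longlongrightarrow> 0) FF"
    using scalar_solution[OF rnot1[OF root1] ell_tendsto[OF e0]] by blast
  obtain X2 where X2: "\<forall>k. X2 (k+1) = r2 * X2 k - ell r2 (e k)" "(X2 \<longlongrightarrow> 0) FF"
    using scalar_solution[OF rnot1[OF root2] ell_tendsto[OF e0]] by blast
  define D where "D k = R (X1 k) (X2 k)" for k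
  define z where "z k = w k - D k" for k
  have step: "z (k+1) = M *v z k" for k
  proof (rule ell_inj)
    have "ell r1 (e k) = r1 * ell r1 (w k) - ell r1 (w (k+1))"
      unfolding e_def ell_diff ell_M[OF root1] ..
    then have E: "ell r1 (e k) = r1 * ell r1 (w k) - ell r1 (w (k+1))" by simp
    have A: "ell r1 (z (k+1)) = ell r1 (w (k+1)) - X1 (k+1)" by (simp add: z_def ell_diff D_def ell_R1)
    have B: "ell r1 (M *v z k) = r1 * (ell r1 (w k) - X1 k)" by (simp add: ell_M[OF root1] z_def ell_diff D_def ell_R1)
    have C: "X1 (k+1) = r1 * X1 k - ell r1 (e k)" using X1(1) by blast
    show "ell r1 (z (k+1)) = ell r1 (M *v z k)"
      unfolding A B C E by (simp add: algebra_simps)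
    have "ell r2 (e k) = r2 * ell r2 (w k) - ell r2 (w (k+1))"
      unfolding e_def ell_diff ell_M[OF root2] ..
    then have E: "ell r2 (e k) = r2 * ell r2 (w k) - ell r2 (w (k+1))" by simp
    have A: "ell r2 (z (k+1)) = ell r2 (w (k+1)) - X2 (k+1)" by (simp add: z_def ell_diff D_def ell_R2)
    have B: "ell r2 (M *v z k) = r2 * (ell r2 (w k) - X2 k)" by (simp add: ell_M[OF root2] z_def ell_diff D_def ell_R2)
    have C: "X2 (k+1) = r2 * X2 k - ell r2 (e k)" using X2(1) by blast
    show "ell r2 (z (k+1)) = ell r2 (M *v z k)"
      unfolding A B C E by (simp add: algebra_simps)
  qed
  have "(D \<longlongrightarrow> 0) FF" unfolding D_def by (rule R_tendsto[OF X1(2) X2(2)])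
  then have "((\<lambda>k. z k - w k) \<longlongrightarrow> 0) FF"
    unfolding z_def using tendsto_minus by fastforce
  with step show ?thesis by blast
qed

end
lemma inv_tendsto_FF: "((\<lambda>k::int. 2 / (real_of_int \<bar>k\<bar> + 1)) \<longlongrightarrow> 0) FF"
proof (rule tendstoI)
  fix \<epsilon> :: real assume e: "\<epsilon> > 0"
  obtain N :: int where N: "2 / \<epsilon> \<le> of_int N" using ex_le_of_int by blast
  have key: "dist (2 / (real_of_int \<bar>k\<bar> + 1)) 0 < \<epsilon>" if "\<bar>k\<bar> \<ge> N" for k
  proof -
    have "2 / \<epsilon> \<le> real_of_int \<bar>k\<bar>" using N that by linarith
    then have "2 \<le> \<epsilon> * real_of_int \<bar>k\<bar>" using e by (simp add: divide_le_eq mult.commute)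
    then have h2: "2 < \<epsilon> * (real_of_int \<bar>k\<bar> + 1)" using e by (simp add: algebra_simps)
    have pos: "real_of_int \<bar>k\<bar> + 1 > 0" by simp
    have "2 / (real_of_int \<bar>k\<bar> + 1) < \<epsilon>"
      by (subst pos_divide_less_eq[OF pos]) (rule h2)
    then show ?thesis by simp
  qed
  have "\<forall>k\<ge>max N 0. dist (2 / (real_of_int \<bar>k\<bar> + 1)) 0 < \<epsilon>"
    by (intro allI impI key) auto
  moreover have "\<forall>k\<le>- N. dist (2 / (real_of_int \<bar>k\<bar> + 1)) 0 < \<epsilon>"
    by (intro allI impI key) auto
  ultimately show "eventually (\<lambda>k. dist (2 / (real_of_int \<bar>k\<bar> + 1)) 0 < \<epsilon>) FF"
    unfolding eventually_sup eventually_at_top_linorder eventually_at_bot_linorder by blast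
qed

context hypA begin

lemma g_Sphere: "S \<in> Sphere \<Longrightarrow> gA A S \<in> Sphere"
  by (auto simp: Sphere_def gA_scls)

lemma inj_g: "inj_on (gA A) Sphere"
proof (rule inj_onI)
  fix S T assume "S \<in> Sphere" "T \<in> Sphere" and eq: "gA A S = gA A T"
  then obtain x y where xy: "S = scls x" "T = scls y" by (auto simp: Sphere_def)
  have "M *v x \<in> scls (M *v y)" using eq scls_self[of "M *v x"] by (simp add: xy gA_scls)
  then have "rel (M *v x) (M *v y)" by (simp add: scls_mem)
  then have "rel x y" using rel_minv minv_M by metis
  then have "x \<in> scls y" by (simp add: scls_mem)
  then show "S = T" using xy scls_eq by simp
qed

lemma inv_g: "inv_into Sphere (gA A) (scls (M *v x)) = scls x"
proof -
  have "scls x \<in> Sphere" by (simp add: Sphere_def)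
  then show ?thesis using inv_into_f_f[OF inj_g] gA_scls by metis
qed

lemma orbit_iter:
  fixes z :: "int \<Rightarrow> real^2"
  assumes z: "\<And>k. z (k+1) = M *v z k"
  shows "iter_int Sphere (gA A) k (scls (z 0)) = scls (z k)"
proof -
  have pos: "(gA A ^^ n) (scls (z 0)) = scls (z (int n))" for n
  proof (induction n)
    case 0 then show ?case by simp
  next
    case (Suc n)
    have "z (int (Suc n)) = M *v z (int n)" using z[of "int n"] by (simp add: add.commute)
    then show ?case using Suc by (simp add: gA_scls)
  qed
  have neg: "(inv_into Sphere (gA A) ^^ n) (scls (z 0)) = scls (z (- int n))" for n
  proof (induction n)
    case 0 then show ?case by simp
  next
    case (Suc n)
    have "z (- int n) = M *v z (- int n - 1)" using z[of "- int n - 1"] by simp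
    then have st: "inv_into Sphere (gA A) (scls (z (- int n))) = scls (z (- int n - 1))"
      by (simp add: inv_g)
    have e: "- int (Suc n) = - int n - 1" by simp
    show ?case unfolding funpow.simps(2) comp_apply Suc.IH e by (rule st)
  qed
  show ?thesis
  proof (cases "0 \<le> k")
    case True
    then show ?thesis using pos[of "nat k"] by (simp add: iter_int_def)
  next
    case False
    then show ?thesis using neg[of "nat (- k)"] by (simp add: iter_int_def)
  qed
qed

lemma main: "two_sided_limit_shadowing Sphere Sdist (gA A)"
  unfolding two_sided_limit_shadowing_def
proof (intro allI impI)
  fix sq :: "int \<Rightarrow> (real^2) set"
  assume mem: "\<forall>k. sq k \<in> Sphere"
  assume lim: "((\<lambda>k. Sdist (gA A (sq k)) (sq (k + 1))) \<longlongrightarrow> 0) FF"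
  define \<delta> where "\<delta> k = Sdist (gA A (sq k)) (sq (k + 1))" for k
  define rep where "rep k = (SOME v. sq k = scls v)" for k
  have rep: "sq k = scls (rep k)" for k
  proof -
    have "\<exists>v. sq k = scls v" using mem by (auto simp: Sphere_def)
    then show ?thesis unfolding rep_def by (rule someI_ex)
  qed
  have ne: "scls v \<noteq> {}" for v using scls_self by blast
  have fw_ex: "\<exists>v'. scls v' = sq (int n + 1) \<and> dist (M *v v) v' < \<delta> (int n) + 1 / (real n + 1)"
    if hv: "scls v = sq (int n)" for n v
  proof -
    have d: "\<delta> (int n) = Sdist (scls (M *v v)) (scls (rep (int n + 1)))"
      by (simp add: \<delta>_def hv[symmetric] gA_scls rep[symmetric])
    obtain p q where pq: "p \<in> scls (M *v v)" "q \<in> scls (rep (int n + 1))"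
      "dist p q < Sdist (scls (M *v v)) (scls (rep (int n + 1))) + 1 / (real n + 1)"
      using Sdist_approx[OF ne[of "M *v v"] ne[of "rep (int n + 1)"], of "1 / (real n + 1)"] by auto
    obtain b' where b': "b' \<in> scls (rep (int n + 1))" "dist (M *v v) b' = dist p q"
      using transport[OF pq(1,2) scls_self] by blast
    have "scls b' = sq (int n + 1)" using scls_eq[OF b'(1)] rep by simp
    then show ?thesis using b' pq(3) d by auto
  qed
  have bw_ex: "\<exists>v'. scls v' = sq (- int n - 1) \<and> dist (M *v v') v < \<delta> (- int n - 1) + 1 / (real n + 1)"
    if hv: "scls v = sq (- int n)" for n v
  proof -
    define u where "u = rep (- int n - 1)"
    have d: "\<delta> (- int n - 1) = Sdist (scls (M *v u)) (scls v)"
    proof -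
      have "sq (- int n - 1) = scls u" using rep u_def by simp
      moreover have "- int n - 1 + 1 = - int n" by simp
      ultimately show ?thesis by (simp add: \<delta>_def hv gA_scls)
    qed
    obtain p q where pq: "p \<in> scls (M *v u)" "q \<in> scls v"
      "dist p q < Sdist (scls (M *v u)) (scls v) + 1 / (real n + 1)"
      using Sdist_approx[OF ne[of "M *v u"] ne[of v], of "1 / (real n + 1)"] by auto
    obtain a' where a': "a' \<in> scls (M *v u)" "dist a' v = dist p q"
      using transport2[OF pq(1,2) scls_self] by blast
    have "rel a' (M *v u)" using a'(1) by (simp add: scls_mem)
    then have "rel (minv a') u" using rel_minv minv_M by metis
    then have "scls (minv a') = scls u" using scls_eq by (simp add: scls_mem)
    then have "scls (minv a') = sq (- int n - 1)" using rep by (simp add: u_def)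
    moreover have "M *v minv a' = a'" by (rule M_minv)
    ultimately show ?thesis using a' pq(3) d by auto
  qed
  define fw where "fw = rec_nat (rep 0) (\<lambda>n v. SOME v'. scls v' = sq (int n + 1) \<and> dist (M *v v) v' < \<delta> (int n) + 1 / (real n + 1))"
  define bw where "bw = rec_nat (rep 0) (\<lambda>n v. SOME v'. scls v' = sq (- int n - 1) \<and> dist (M *v v') v < \<delta> (- int n - 1) + 1 / (real n + 1))"
  have fw0: "fw 0 = rep 0" by (simp add: fw_def)
  have bw0: "bw 0 = rep 0" by (simp add: bw_def)
  have fwS: "fw (Suc n) = (SOME v'. scls v' = sq (int n + 1) \<and> dist (M *v fw n) v' < \<delta> (int n) + 1 / (real n + 1))" for n
    by (simp add: fw_def)
  have bwS: "bw (Suc n) = (SOME v'. scls v' = sq (- int n - 1) \<and> dist (M *v v') (bw n) < \<delta> (- int n - 1) + 1 / (real n + 1))" for n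
    by (simp add: bw_def)
  have fwP: "scls (fw n) = sq (int n) \<and> dist (M *v fw n) (fw (Suc n)) < \<delta> (int n) + 1 / (real n + 1)" for n
  proof (induction n)
    case 0
    have h: "scls (fw 0) = sq (int 0)" by (simp add: fw0 rep)
    show ?case using h someI_ex[OF fw_ex[OF h]] by (simp add: fwS)
  next
    case (Suc n)
    have h: "scls (fw (Suc n)) = sq (int (Suc n))"
      using someI_ex[OF fw_ex[OF Suc[THEN conjunct1]]] by (simp add: fwS add.commute)
    show ?case using h someI_ex[OF fw_ex[OF h]] by (simp add: fwS[of "Suc n"])
  qed
  have bwP: "scls (bw n) = sq (- int n) \<and> dist (M *v bw (Suc n)) (bw n) < \<delta> (- int n - 1) + 1 / (real n + 1)" for n
  proof (induction n)
    case 0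
    have h: "scls (bw 0) = sq (- int 0)" by (simp add: bw0 rep)
    show ?case using h someI_ex[OF bw_ex[OF h]] by (simp add: bwS)
  next
    case (Suc n)
    have e: "- int (Suc n) = - int n - 1" by simp
    have h: "scls (bw (Suc n)) = sq (- int (Suc n))"
      unfolding e using someI_ex[OF bw_ex[OF Suc[THEN conjunct1]]] by (simp add: bwS)
    show ?case using h someI_ex[OF bw_ex[OF h]] by (simp add: bwS[of "Suc n"])
  qed
  define w where "w k = (if 0 \<le> k then fw (nat k) else bw (nat (- k)))" for k
  have wP: "scls (w k) = sq k" for k
    using fwP[of "nat k"] bwP[of "nat (- k)"] by (simp add: w_def)
  have wstep: "norm (M *v w k - w (k+1)) \<le> \<delta> k + 2 / (real_of_int \<bar>k\<bar> + 1)" for k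
  proof (cases "0 \<le> k")
    case True
    then obtain n where n: "k = int n" by (metis nonneg_int_cases)
    have e: "nat (int n + 1) = Suc n" by arith
    have "w k = fw n" "w (k+1) = fw (Suc n)" using n e by (simp_all add: w_def)
    moreover have "1 / (real n + 1) \<le> 2 / (real_of_int \<bar>k\<bar> + 1)" using n by (simp add: divide_simps)
    ultimately show ?thesis using fwP[of n] n by (simp add: dist_norm)
  next
    case False
    define n where "n = nat (- k - 1)"
    have n: "k = - int n - 1" using False by (simp add: n_def)
    have "w k = bw (Suc n)" using n by (simp add: w_def nat_add_distrib)
    moreover have "w (k+1) = bw n"
    proof -
      have k1: "k + 1 = - int n" using n by simp
      show ?thesis
      proof (cases "n = 0")
        case True
        have "w (k+1) = w 0" unfolding k1 True by simp
        also have "\<dots> = fw 0" by (simp add: w_def)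
        also have "\<dots> = bw 0" by (simp only: fw0 bw0)
        finally show ?thesis unfolding True .
      next
        case False
        then have "\<not> 0 \<le> - int n" by simp
        then show ?thesis unfolding k1 w_def by simp
      qed
    qed
    moreover have "1 / (real n + 1) \<le> 2 / (real_of_int \<bar>k\<bar> + 1)" using n by (simp add: divide_simps)
    ultimately show ?thesis using bwP[of n] n by (simp add: dist_norm)
  qed
  have lim2: "((\<lambda>k. \<delta> k + 2 / (real_of_int \<bar>k\<bar> + 1)) \<longlongrightarrow> 0) FF"
    unfolding \<delta>_def by (rule tendsto_add_zero[OF lim inv_tendsto_FF])
  have ev1: "eventually (\<lambda>k. 0 \<le> norm (M *v w k - w (k+1))) FF"
    by (rule always_eventually) simp
  have ev2: "eventually (\<lambda>k. norm (M *v w k - w (k+1)) \<le> \<delta> k + 2 / (real_of_int \<bar>k\<bar> + 1)) FF"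
    by (rule always_eventually) (use wstep in blast)
  have "((\<lambda>k. norm (M *v w k - w (k+1))) \<longlongrightarrow> 0) FF"
    by (rule tendsto_sandwich[OF ev1 ev2 tendsto_const lim2])
  then have "((\<lambda>k. M *v w k - w (k+1)) \<longlongrightarrow> 0) FF" by (rule tendsto_norm_zero_cancel)
  then obtain z where z: "\<forall>k. z (k+1) = M *v z k" "((\<lambda>k. z k - w k) \<longlongrightarrow> 0) FF"
    using hyperbolic_shadow by blast
  have orb: "iter_int Sphere (gA A) k (scls (z 0)) = scls (z k)" for k
    by (rule orbit_iter) (use z(1) in blast)
  have ev3: "eventually (\<lambda>k. 0 \<le> Sdist (iter_int Sphere (gA A) k (scls (z 0))) (sq k)) FF"
  proof (rule always_eventually, rule allI)
    fix k
    show "0 \<le> Sdist (iter_int Sphere (gA A) k (scls (z 0))) (sq k)"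
      unfolding orb wP[symmetric] by (rule Sdist_nonneg[OF ne ne])
  qed
  have ev4: "eventually (\<lambda>k. Sdist (iter_int Sphere (gA A) k (scls (z 0))) (sq k) \<le> norm (z k - w k)) FF"
  proof (rule always_eventually, rule allI)
    fix k
    have "Sdist (scls (z k)) (scls (w k)) \<le> dist (z k) (w k)" by (intro Sdist_le scls_self)
    then show "Sdist (iter_int Sphere (gA A) k (scls (z 0))) (sq k) \<le> norm (z k - w k)"
      unfolding orb wP[symmetric] dist_norm .
  qed
  have "((\<lambda>k. Sdist (iter_int Sphere (gA A) k (scls (z 0))) (sq k)) \<longlongrightarrow> 0) FF"
    by (rule tendsto_sandwich[OF ev3 ev4 tendsto_const tendsto_norm_zero[OF z(2)]])
  moreover have "scls (z 0) \<in> Sphere" by (simp add: Sphere_def)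
  ultimately show "\<exists>y\<in>Sphere. ((\<lambda>k. Sdist (iter_int Sphere (gA A) k y) (sq k)) \<longlongrightarrow> 0) FF" by blast
qed

end

theorem mainTheorem16:
  fixes A :: "int^2^2"
  assumes "det A = 1"
    and "\<forall>z::complex. cmod z = 1 \<longrightarrow>
           det ((\<chi> i j. (if i = j then z else 0) - complex_of_int (A$i$j)) :: complex^2^2) \<noteq> 0"
  shows "two_sided_limit_shadowing Sphere Sdist (gA A)"
proof -
  have dA: "A$1$1 * A$2$2 - A$1$2 * A$2$1 = 1" using assms(1) by (simp add: det_2)
  have tr: "\<bar>A$1$1 + A$2$2\<bar> > 2"
  proof (rule ccontr)
    assume h: "\<not> \<bar>A$1$1 + A$2$2\<bar> > 2"
    define T where "T = real_of_int (A$1$1 + A$2$2)"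
    have "real_of_int \<bar>A$1$1 + A$2$2\<bar> \<le> 2" using h by simp
    then have T2: "\<bar>T\<bar> \<le> 2" by (simp add: T_def)
    define x where "x = T / 2"
    define y where "y = sqrt (1 - x^2)"
    have x1: "\<bar>x\<bar> \<le> 1" using T2 by (simp add: x_def)
    then have x2: "x^2 \<le> 1" by (simp add: abs_square_le_1)
    have y2: "y^2 = 1 - x^2" using x2 by (simp add: y_def)
    define z where "z = Complex x y"
    have nz: "cmod z = 1" using y2 by (simp add: z_def complex_norm)
    have Tx: "T = 2 * x" by (simp add: x_def)
    have D: "det ((\<chi> i j. (if i = j then z else 0) - complex_of_int (A$i$j)) :: complex^2^2)
        = z^2 - complex_of_int (A$1$1 + A$2$2) * z + complex_of_int (A$1$1 * A$2$2 - A$1$2 * A$2$1)"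
      by (simp add: det_2 algebra_simps power2_eq_square)
    have cT: "complex_of_int (A$1$1 + A$2$2) = complex_of_real T"
      by (simp add: T_def)
    have "z^2 - complex_of_real T * z + 1 = 0"
    proof -
      have "Re (z^2 - complex_of_real T * z + 1) = x*x - y^2 - T*x + 1"
        by (simp add: z_def power2_eq_square)
      also have "\<dots> = 0" using y2 Tx by (simp add: power2_eq_square algebra_simps)
      finally have re: "Re (z^2 - complex_of_real T * z + 1) = 0" .
      have "Im (z^2 - complex_of_real T * z + 1) = 2*x*y - T*y"
        by (simp add: z_def power2_eq_square)
      also have "\<dots> = 0" using Tx by simp
      finally have im: "Im (z^2 - complex_of_real T * z + 1) = 0" .
      from re im show ?thesis by (simp add: complex_eq_iff)
    qed
    then have "det ((\<chi> i j. (if i = j then z else 0) - complex_of_int (A$i$j)) :: complex^2^2) = 0"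
      unfolding D cT dA by simp
    with assms(2) nz show False by blast
  qed
  interpret hypA A using assms(1) tr by unfold_locales
  show ?thesis by (rule main)
qed

end
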